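(* Let $\mathbb{F}$ be a field with $\mathrm{Char}(\mathbb{F})=2$. Every nontrivial $2$-dimensional associative algebra over $\mathbb{F}$ is isomorphic to exactly one of the following algebras (given by their matrices of structure constants): <ol> <li>$As_{12,2}^1=\begin{pmatrix}0&0&0&0\\1&0&0&0\end{pmatrix}$;</li> <li>$As_{11,2}^2(\beta_1)=\begin{pmatrix}0&1&1&0\\ \beta_1&0&0&1\end{pmatrix}$, $\beta_1\in\mathbb{F}$, where $As_{11,2}^2(\beta_1)\cong As_{11,2}^2(\beta_1')$ if and only if $\beta_1'=b^2(\beta_1+a^2)$ for some $a,b\in\mathbb{F}$, $b\neq0$;</li> <li>$As_{6,2}^3=\begin{pmatrix}1&0&0&0\\0&0&1&0\end{pmatrix}$;</li> <li>$As_{4,2}^4(\beta_1)=\begin{pmatrix}1&1&1&0\\ \beta_1&0&0&1\end{pmatrix}$, $\beta_1\in\mathbb{F}$, where $As_{4,2}^4(\beta_1)\cong As_{4,2}^4(\beta_1')$ if and only if $\beta_1'=\beta_1+a+a^2$ for some $a\in\mathbb{F}$;</li> <li>$As_{3,2}^5=\begin{pmatrix}1&0&0&0\\0&0&0&0\end{pmatrix}$;</li> <li>$As_{3,2}^6=\begin{pmatrix}1&0&0&0\\0&1&0&0\end{pmatrix}$.</li> </ol> Algebras from different items are pairwise non-isomorphic.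
   Context: Let $\mathbb{F}$ be a field. A $2$-dimensional algebra over $\mathbb{F}$ is a $2$-dimensional $\mathbb{F}$-vector space with a bilinear product; it is associative if $(xy)z=x(yz)$ for all $x,y,z$. Fix a basis $(e_1,e_2)$. The matrix of structure constants $\begin{pmatrix}\alpha_1&\alpha_2&\alpha_3&\alpha_4\\ \beta_1&\beta_2&\beta_3&\beta_4\end{pmatrix}$ denotes the algebra with $e_1e_1=\alpha_1e_1+\beta_1e_2$, $e_1e_2=\alpha_2e_1+\beta_2e_2$, $e_2e_1=\alpha_3e_1+\beta_3e_2$, $e_2e_2=\alpha_4e_1+\beta_4e_2$. An algebra is nontrivial if its product is not identically zero. Two algebras are isomorphic if there is an invertible linear map $f$ between them with $f(xy)=f(x)f(y)$ for all $x,y$. *)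

theory Defs
  imports Main
begin

text \<open>A 2-dimensional algebra over a field is given, w.r.t. the basis e1=(1,0), e2=(0,1)
 of F^2 (vectors = pairs), by its matrix of structure constants
 ((alpha1,alpha2,alpha3,alpha4),(beta1,beta2,beta3,beta4)).\<close>

type_synonym 'a sc = "('a \<times> 'a \<times> 'a \<times> 'a) \<times> ('a \<times> 'a \<times> 'a \<times> 'a)"

definition sc_mult :: "'a::field sc \<Rightarrow> 'a \<times> 'a \<Rightarrow> 'a \<times> 'a \<Rightarrow> 'a \<times> 'a" where
  "sc_mult A x y =
     (let ((a1,a2,a3,a4),(b1,b2,b3,b4)) = A; (x1,x2) = x; (y1,y2) = y in
       (x1*y1*a1 + x1*y2*a2 + x2*y1*a3 + x2*y2*a4,
        x1*y1*b1 + x1*y2*b2 + x2*y1*b3 + x2*y2*b4))"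

definition vadd2 :: "'a::field \<times> 'a \<Rightarrow> 'a \<times> 'a \<Rightarrow> 'a \<times> 'a" where
  "vadd2 x y = (fst x + fst y, snd x + snd y)"

definition vscale2 :: "'a::field \<Rightarrow> 'a \<times> 'a \<Rightarrow> 'a \<times> 'a" where
  "vscale2 c x = (c * fst x, c * snd x)"

definition linear2 :: "('a::field \<times> 'a \<Rightarrow> 'a \<times> 'a) \<Rightarrow> bool" where
  "linear2 f \<longleftrightarrow> (\<forall>x y. f (vadd2 x y) = vadd2 (f x) (f y)) \<and> (\<forall>c x. f (vscale2 c x) = vscale2 c (f x))"

definition sc_assoc :: "'a::field sc \<Rightarrow> bool" where
  "sc_assoc A \<longleftrightarrow> (\<forall>x y z. sc_mult A (sc_mult A x y) z = sc_mult A x (sc_mult A y z))"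

definition sc_nontrivial :: "'a::field sc \<Rightarrow> bool" where
  "sc_nontrivial A \<longleftrightarrow> (\<exists>x y. sc_mult A x y \<noteq> (0, 0))"

definition sc_iso :: "'a::field sc \<Rightarrow> 'a sc \<Rightarrow> bool" where
  "sc_iso A B \<longleftrightarrow> (\<exists>f. linear2 f \<and> bij f \<and> (\<forall>x y. f (sc_mult A x y) = sc_mult B (f x) (f y)))"

definition As1 :: "'a::field sc" where "As1 = ((0,0,0,0),(1,0,0,0))"
definition As2 :: "'a::field \<Rightarrow> 'a sc" where "As2 b = ((0,1,1,0),(b,0,0,1))"
definition As3 :: "'a::field sc" where "As3 = ((1,0,0,0),(0,0,1,0))"
definition As4 :: "'a::field \<Rightarrow> 'a sc" where "As4 b = ((1,1,1,0),(b,0,0,1))"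
definition As5 :: "'a::field sc" where "As5 = ((1,0,0,0),(0,0,0,0))"
definition As6 :: "'a::field sc" where "As6 = ((1,0,0,0),(0,1,0,0))"

end

theory Submission
  imports Defs
begin


definition det2 :: "'a::field \<times> 'a \<Rightarrow> 'a \<times> 'a \<Rightarrow> 'a" where
  "det2 u v = fst u * snd v - snd u * fst v"

definition lc :: "'a::field \<Rightarrow> 'a \<Rightarrow> 'a \<times> 'a \<Rightarrow> 'a \<times> 'a \<Rightarrow> 'a \<times> 'a" where
  "lc a b u v = (a * fst u + b * fst v, a * snd u + b * snd v)"

lemma sc_mult_eq:
  "sc_mult ((a1,a2,a3,a4),(b1,b2,b3,b4)) (x1,x2) (y1,y2) =
     (x1*y1*a1 + x1*y2*a2 + x2*y1*a3 + x2*y2*a4,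
      x1*y1*b1 + x1*y2*b2 + x2*y1*b3 + x2*y2*b4)"
  by (simp add: sc_mult_def)

lemma mul_lc:
  "sc_mult A (lc a b u v) (lc c d u v) =
    (a*c*fst (sc_mult A u u) + a*d*fst (sc_mult A u v) + b*c*fst (sc_mult A v u) + b*d*fst (sc_mult A v v),
     a*c*snd (sc_mult A u u) + a*d*snd (sc_mult A u v) + b*c*snd (sc_mult A v u) + b*d*snd (sc_mult A v v))"
proof -
  obtain a1 a2 a3 a4 b1 b2 b3 b4 where A: "A = ((a1,a2,a3,a4),(b1,b2,b3,b4))" by (metis prod.exhaust)
  obtain u1 u2 v1 v2 where uv: "u = (u1,u2)" "v = (v1,v2)" by fastforce
  show ?thesis unfolding A uv lc_def sc_mult_eq by (simp add: algebra_simps)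
qed

lemma mul_scale: "sc_mult A (vscale2 c x) (vscale2 d y) = vscale2 (c*d) (sc_mult A x y)"
proof -
  obtain a1 a2 a3 a4 b1 b2 b3 b4 where A: "A = ((a1,a2,a3,a4),(b1,b2,b3,b4))" by (metis prod.exhaust)
  obtain x1 x2 y1 y2 where uv: "x = (x1,x2)" "y = (y1,y2)" by fastforce
  show ?thesis unfolding A uv vscale2_def sc_mult_eq by (simp add: algebra_simps)
qed

lemma mul_zero[simp]: "sc_mult A (0,0) y = (0,0)" "sc_mult A x (0,0) = (0,0)"
proof -
  obtain a1 a2 a3 a4 b1 b2 b3 b4 where A: "A = ((a1,a2,a3,a4),(b1,b2,b3,b4))" by (metis prod.exhaust)
  obtain x1 x2 y1 y2 where uv: "x = (x1,x2)" "y = (y1,y2)" by fastforce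
  show "sc_mult A (0,0) y = (0,0)" "sc_mult A x (0,0) = (0,0)" unfolding A uv sc_mult_eq by simp_all
qed

lemma linear2_zero: "linear2 f \<Longrightarrow> f (0,0) = (0,0)"
  unfolding linear2_def by (metis (no_types, lifting) fst_conv mult_zero_left snd_conv vscale2_def)

lemma linear2_lc: "linear2 f \<Longrightarrow> f (lc a b u v) = lc a b (f u) (f v)"
proof -
  assume f: "linear2 f"
  have "lc a b u v = vadd2 (vscale2 a u) (vscale2 b v)" by (simp add: lc_def vadd2_def vscale2_def)
  then show ?thesis using f unfolding linear2_def by (simp add: lc_def vadd2_def vscale2_def)
qed

lemma linear2_scale: "linear2 f \<Longrightarrow> f (vscale2 c x) = vscale2 c (f x)"
  unfolding linear2_def by blast

lemma lc_apply: "linear2 f \<Longrightarrow> f (x1,x2) = lc x1 x2 (f (1,0)) (f (0,1))"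
proof -
  assume f: "linear2 f"
  have "(x1,x2) = lc x1 x2 (1,0) (0,1)" by (simp add: lc_def)
  then show ?thesis using linear2_lc[OF f] by metis
qed

lemma sc_iso_sym: assumes "sc_iso A B" shows "sc_iso B A"
proof -
  obtain f where f: "linear2 f" "bij f" "\<And>x y. f (sc_mult A x y) = sc_mult B (f x) (f y)"
    using assms unfolding sc_iso_def by blast
  let ?g = "inv f"
  have fg: "\<And>y. f (?g y) = y" using f(2) by (simp add: bij_is_surj surj_f_inv_f)
  have inj: "\<And>x y. f x = f y \<Longrightarrow> x = y" using f(2) by (meson bij_is_inj injD)
  have "linear2 ?g" unfolding linear2_def
  proof (intro conjI allI)
    fix x y show "?g (vadd2 x y) = vadd2 (?g x) (?g y)"
      by (rule inj) (metis f(1) fg linear2_def)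
  next
    fix c x show "?g (vscale2 c x) = vscale2 c (?g x)"
      by (rule inj) (metis f(1) fg linear2_def)
  qed
  moreover have "bij ?g" using f(2) by (rule bij_imp_bij_inv)
  moreover have "\<And>x y. ?g (sc_mult B x y) = sc_mult A (?g x) (?g y)"
    by (rule inj) (metis f(3) fg)
  ultimately show ?thesis unfolding sc_iso_def by blast
qed

lemma sc_iso_trans: assumes "sc_iso A B" "sc_iso B C" shows "sc_iso A C"
proof -
  obtain f where f: "linear2 f" "bij f" "\<And>x y. f (sc_mult A x y) = sc_mult B (f x) (f y)"
    using assms(1) unfolding sc_iso_def by blast
  obtain g where g: "linear2 g" "bij g" "\<And>x y. g (sc_mult B x y) = sc_mult C (g x) (g y)"
    using assms(2) unfolding sc_iso_def by blast
  have "linear2 (g \<circ> f)" using f(1) g(1) unfolding linear2_def comp_def by metis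
  moreover have "bij (g \<circ> f)" using f(2) g(2) by (rule bij_comp)
  moreover have "\<And>x y. (g \<circ> f) (sc_mult A x y) = sc_mult C ((g\<circ>f) x) ((g\<circ>f) y)"
    using f(3) g(3) by simp
  ultimately show ?thesis unfolding sc_iso_def by blast
qed

lemma sc_iso_refl: "sc_iso A A"
  unfolding sc_iso_def linear2_def by (rule exI[of _ id]) simp



lemma div_aux: "(d::'a::field) \<noteq> 0 \<Longrightarrow> a*u + b*v = y*d \<Longrightarrow> a*u/d + b*v/d = y"
proof -
  assume d: "d \<noteq> 0" and e: "a*u + b*v = y*d"
  have "a*u/d + b*v/d = (a*u+b*v)/d" by (simp add: add_divide_distrib)
  also have "\<dots> = y" using d e by simp
  finally show ?thesis .
qed

lemma basis_iso:
  fixes A :: "'a::field sc"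
  assumes d: "det2 u v \<noteq> 0"
    and h1: "sc_mult A u u = lc a1 b1 u v" and h2: "sc_mult A u v = lc a2 b2 u v"
    and h3: "sc_mult A v u = lc a3 b3 u v" and h4: "sc_mult A v v = lc a4 b4 u v"
  shows "sc_iso A ((a1,a2,a3,a4),(b1,b2,b3,b4))"
proof -
  define g where "g x = lc (fst x) (snd x) u v" for x
  define D where "D = det2 u v"
  define h where "h y = ((snd v * fst y - fst v * snd y)/D, (fst u * snd y - snd u * fst y)/D)" for y :: "'a \<times> 'a"
  have D: "D \<noteq> 0" using d D_def by simp
  obtain u1 u2 v1 v2 where uv: "u = (u1,u2)" "v = (v1,v2)" by fastforce
  have D': "u1*v2 - u2*v1 \<noteq> 0" using D uv unfolding D_def det2_def by simp
  have hg: "h (g x) = x" for x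
  proof (cases x)
    case (Pair x1 x2)
    have e1: "(v2 * (x1 * u1 + x2 * v1) - v1 * (x1 * u2 + x2 * v2)) = x1 * (u1*v2 - u2*v1)" by algebra
    have e2: "(u1 * (x1 * u2 + x2 * v2) - u2 * (x1 * u1 + x2 * v1)) = x2 * (u1*v2 - u2*v1)" by algebra
    show ?thesis using D' unfolding Pair h_def g_def lc_def D_def det2_def uv by (simp add: e1 e2)
  qed
  have DD: "D = u1*v2 - u2*v1" unfolding D_def det2_def uv by simp
  have gh: "g (h y) = y" for y
  proof (cases y)
    case (Pair y1 y2)
    show ?thesis unfolding Pair h_def g_def lc_def uv
      apply simp apply (intro conjI div_aux)
      using D unfolding DD by (simp_all add: algebra_simps)
  qed
  have "bij g" by (metis bijI' gh hg)
  moreover have "linear2 g" unfolding linear2_def g_def lc_def vadd2_def vscale2_def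
    by (simp add: algebra_simps)
  moreover have "g (sc_mult ((a1,a2,a3,a4),(b1,b2,b3,b4)) x y) = sc_mult A (g x) (g y)" for x y
  proof -
    have "sc_mult A (g x) (g y) = sc_mult A (lc (fst x) (snd x) u v) (lc (fst y) (snd y) u v)"
      by (simp add: g_def)
    also have "\<dots> = g (sc_mult ((a1,a2,a3,a4),(b1,b2,b3,b4)) x y)"
      unfolding mul_lc h1 h2 h3 h4 g_def
      by (cases x, cases y) (simp add: sc_mult_eq lc_def algebra_simps)
    finally show ?thesis by simp
  qed
  ultimately have "sc_iso ((a1,a2,a3,a4),(b1,b2,b3,b4)) A" unfolding sc_iso_def by blast
  then show ?thesis by (rule sc_iso_sym)
qed



lemma assoc_at: "sc_assoc A \<Longrightarrow> sc_mult A (sc_mult A x y) z = sc_mult A x (sc_mult A y z)"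
  unfolding sc_assoc_def by blast

definition target :: "'a::field sc \<Rightarrow> bool" where
  "target A \<longleftrightarrow> sc_iso A As1 \<or> (\<exists>b. sc_iso A (As2 b)) \<or> sc_iso A As3 \<or>
        (\<exists>b. sc_iso A (As4 b)) \<or> sc_iso A As5 \<or> sc_iso A As6"

lemma target_iso: "sc_iso A B \<Longrightarrow> target B \<Longrightarrow> target A"
  unfolding target_def by (meson sc_iso_trans)

lemma caseI:
  fixes a2 :: "'a::field"
  assumes as: "sc_assoc ((0,a2,a3,a4),(1,b2,b3,b4))"
  shows "target ((0,a2,a3,a4),(1,b2,b3,b4))"
proof -
  let ?B = "((0,a2,a3,a4),(1,b2,b3,b4))"
  have e1: "sc_mult ?B (sc_mult ?B (1,0) (1,0)) (1,0) = sc_mult ?B (1,0) (sc_mult ?B (1,0) (1,0))"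
    using assoc_at[OF as] .
  have e2: "sc_mult ?B (sc_mult ?B (1,0) (1,0)) (0,1) = sc_mult ?B (1,0) (sc_mult ?B (1,0) (0,1))"
    using assoc_at[OF as] .
  have h3: "a3 = a2" "b3 = b2" using e1 by (simp_all add: sc_mult_eq)
  have h4: "a4 = a2*b2" "b4 = a2 + b2*b2" using e2 by (simp_all add: sc_mult_eq algebra_simps)
  show ?thesis
  proof (cases "a2 = 0")
    case p0: True
    show ?thesis
    proof (cases "b2 = 0")
      case True
      then have "?B = As1" using p0 h3 h4 by (simp add: As1_def)
      then show ?thesis unfolding target_def using sc_iso_refl by metis
    next
      case q: False
      have "sc_iso ?B ((1,0,0,0),(0,0,0,0))"
        by (rule basis_iso[where u="(0,1/b2^2)" and v="(1,-1/b2)"])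
          (use q p0 h3 h4 in \<open>simp_all add: det2_def sc_mult_eq lc_def field_simps power2_eq_square\<close>)
      then show ?thesis unfolding target_def As5_def by blast
    qed
  next
    case p: False
    show ?thesis
    proof (cases "b2 = 0")
      case q0: True
      have "sc_iso ?B ((0,1,1,0),(a2,0,0,1))"
        by (rule basis_iso[where u="(1,0)" and v="(0,1/a2)"])
          (use q0 p h3 h4 in \<open>simp_all add: det2_def sc_mult_eq lc_def field_simps\<close>)
      then show ?thesis unfolding target_def As2_def by blast
    next
      case q: False
      have "sc_iso ?B ((1,1,1,0),(a2/b2^2,0,0,1))"
        by (rule basis_iso[where u="(1/b2,0)" and v="(-b2/a2,1/a2)"])
          (use q p h3 h4 in \<open>simp_all add: det2_def sc_mult_eq lc_def field_simps power2_eq_square\<close>)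
      then show ?thesis unfolding target_def As4_def by blast
    qed
  qed
qed



lemma caseII:
  fixes a2 :: "'a::field"
  assumes as: "sc_assoc ((1,a2,a3,0),(0,b2,b3,b4))"
  shows "target ((1,a2,a3,0),(0,b2,b3,b4))"
proof -
  let ?B = "((1,a2,a3,0),(0,b2,b3,b4))"
  have A: "sc_mult ?B (sc_mult ?B x y) z = sc_mult ?B x (sc_mult ?B y z)" for x y z
    using assoc_at[OF as] .
  have e112: "a2*b2 = 0" "b2*b2 = b2" using A[of "(1,0)" "(1,0)" "(0,1)"] by (simp_all add: sc_mult_eq algebra_simps)
  have e211: "a3*b3 = 0" "b3*b3 = b3" using A[of "(0,1)" "(1,0)" "(1,0)"] by (simp_all add: sc_mult_eq algebra_simps)
  have e121: "a2 + b2*a3 = a3 + b3*a2" using A[of "(1,0)" "(0,1)" "(1,0)"] by (simp_all add: sc_mult_eq algebra_simps)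
  have e221: "b4*a3 = a3*a3" using A[of "(0,1)" "(0,1)" "(1,0)"] by (simp_all add: sc_mult_eq algebra_simps)
  have e212: "a3*b2 + b3*b4 = a2*b3 + b2*b4" using A[of "(0,1)" "(1,0)" "(0,1)"] by (simp_all add: sc_mult_eq algebra_simps)
  have b2: "b2 = 0 \<or> b2 = 1" using e112(2) by (metis mult_cancel_right1 mult_zero_left)
  have b3: "b3 = 0 \<or> b3 = 1" using e211(2) by (metis mult_cancel_right1 mult_zero_left)
  show ?thesis
  proof (cases "b2 = 1")
    case b21: True
    show ?thesis
    proof (cases "b3 = 1")
      case b31: True
      have a: "a2 = 0" "a3 = 0" using e112 e211 b21 b31 by simp_all
      show ?thesis
      proof (cases "b4 = 0")
        case True
        have "sc_iso ?B ((0,1,1,0),(0,0,0,1))"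
          by (rule basis_iso[where u="(0,1)" and v="(1,0)"])
            (use a b21 b31 True in \<open>simp_all add: det2_def sc_mult_eq lc_def\<close>)
        then show ?thesis unfolding target_def As2_def by blast
      next
        case False
        have "sc_iso ?B ((1,1,1,0),(0,0,0,1))"
          by (rule basis_iso[where u="(0,1/b4)" and v="(1,0)"])
            (use a b21 b31 False in \<open>simp_all add: det2_def sc_mult_eq lc_def field_simps\<close>)
        then show ?thesis unfolding target_def As4_def by blast
      qed
    next
      case False
      then have b30: "b3 = 0" using b3 by simp
      have a: "a2 = 0" "b4 = a3" using e112 e212 b21 b30 by simp_all
      have "sc_iso ?B ((1,0,0,0),(0,1,0,0))"
        by (rule basis_iso[where u="(1,0)" and v="(-a3,1)"])
          (use a b21 b30 in \<open>simp_all add: det2_def sc_mult_eq lc_def algebra_simps\<close>)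
      then show ?thesis unfolding target_def As6_def by blast
    qed
  next
    case False
    then have b20: "b2 = 0" using b2 by simp
    show ?thesis
    proof (cases "b3 = 1")
      case b31: True
      have a: "a3 = 0" "b4 = a2" using e211 e212 b20 b31 by simp_all
      have "sc_iso ?B ((1,0,0,0),(0,0,1,0))"
        by (rule basis_iso[where u="(1,0)" and v="(-a2,1)"])
          (use a b20 b31 in \<open>simp_all add: det2_def sc_mult_eq lc_def algebra_simps\<close>)
      then show ?thesis unfolding target_def As3_def by blast
    next
      case False
      then have b30: "b3 = 0" using b3 by simp
      have a: "a2 = a3" using e121 b20 b30 by simp
      show ?thesis
      proof (cases "b4 = 0")
        case True
        then have "a3 = 0" using e221 by simp
        then have "sc_iso ?B ((1,0,0,0),(0,0,0,0))"
          by (intro basis_iso[where u="(1,0)" and v="(0,1)"])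
            (use a b20 b30 True in \<open>simp_all add: det2_def sc_mult_eq lc_def\<close>)
        then show ?thesis unfolding target_def As5_def by blast
      next
        case b4: False
        have "sc_iso ?B ((1,1,1,0),(0,0,0,1))"
          by (rule basis_iso[where u="(1,0)" and v="(1 - a3/b4,1/b4)"])
            (use a b20 b30 b4 e221 in \<open>simp_all add: det2_def sc_mult_eq lc_def field_simps power2_eq_square\<close>)
        then show ?thesis unfolding target_def As4_def by blast
      qed
    qed
  qed
qed



lemma det_lc1: "det2 (lc a b u v) v = a * det2 u v"
  unfolding det2_def lc_def by (simp add: algebra_simps)
lemma det_lc2: "det2 u (lc a b u v) = b * det2 u v"
  unfolding det2_def lc_def by (simp add: algebra_simps)
lemma det_swap: "det2 v u = - det2 u v"
  unfolding det2_def by (simp add: algebra_simps)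

lemma lc_unique: assumes "det2 u v \<noteq> 0" "lc a b u v = lc c d u v" shows "a = c" "b = d"
proof -
  have "a * det2 u v = c * det2 u v" using det_lc1[of a b u v] det_lc1[of c d u v] assms(2) by metis
  then show "a = c" using assms(1) by simp
  have "b * det2 u v = d * det2 u v" using det_lc2[of u a b v] det_lc2[of u c d v] assms(2) by metis
  then show "b = d" using assms(1) by simp
qed

lemma lc_coord: assumes "det2 u v \<noteq> 0"
  shows "lc (det2 w v / det2 u v) (det2 u w / det2 u v) u v = w"
proof -
  obtain u1 u2 v1 v2 w1 w2 where uv: "u = (u1,u2)" "v = (v1,v2)" "w = (w1,w2)" by (metis prod.exhaust)
  define D where "D = det2 u v"
  have DD: "D = u1*v2 - u2*v1" unfolding D_def det2_def uv by simp
  have D: "D \<noteq> 0" using assms D_def by simp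
  show ?thesis unfolding D_def[symmetric] unfolding uv lc_def det2_def
    apply simp apply (intro conjI div_aux)
    using D unfolding DD by (simp_all add: algebra_simps)
qed

lemma rebase:
  fixes A :: "'a::field sc"
  assumes d: "det2 u v \<noteq> 0"
  shows "\<exists>a1 a2 a3 a4 b1 b2 b3 b4. sc_iso A ((a1,a2,a3,a4),(b1,b2,b3,b4)) \<and>
     sc_mult A u u = lc a1 b1 u v \<and> sc_mult A u v = lc a2 b2 u v \<and>
     sc_mult A v u = lc a3 b3 u v \<and> sc_mult A v v = lc a4 b4 u v"
proof -
  define ca where "ca w = det2 w v / det2 u v" for w
  define cb where "cb w = det2 u w / det2 u v" for w
  have c: "sc_mult A x y = lc (ca (sc_mult A x y)) (cb (sc_mult A x y)) u v" for x y
    unfolding ca_def cb_def using lc_coord[OF d] by simp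
  let ?uu = "sc_mult A u u" and ?uv = "sc_mult A u v" and ?vu = "sc_mult A v u" and ?vv = "sc_mult A v v"
  have "sc_iso A ((ca ?uu, ca ?uv, ca ?vu, ca ?vv),(cb ?uu, cb ?uv, cb ?vu, cb ?vv))"
    by (rule basis_iso[OF d]; rule c)
  then show ?thesis using c by blast
qed

lemma iso_assoc: assumes "sc_iso A B" "sc_assoc A" shows "sc_assoc B"
proof -
  obtain f where f: "linear2 f" "bij f" "\<And>x y. f (sc_mult A x y) = sc_mult B (f x) (f y)"
    using assms(1) unfolding sc_iso_def by blast
  have s: "\<And>y. \<exists>x. y = f x" using f(2) by (metis bij_pointE)
  show ?thesis unfolding sc_assoc_def
  proof (intro allI)
    fix x y z
    obtain x' y' z' where "x = f x'" "y = f y'" "z = f z'" using s by metis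
    then show "sc_mult B (sc_mult B x y) z = sc_mult B x (sc_mult B y z)"
      using f(3) assoc_at[OF assms(2)] by metis
  qed
qed

lemma dep: assumes "det2 x y = 0" "x \<noteq> (0,0)" shows "\<exists>l. y = vscale2 l x"
proof -
  obtain x1 x2 y1 y2 where xy: "x = (x1,x2)" "y = (y1,y2)" by fastforce
  have e: "x1*y2 = x2*y1" using assms(1) unfolding xy det2_def by simp
  show ?thesis
  proof (cases "x1 = 0")
    case True
    then have "x2 \<noteq> 0" using assms(2) xy by simp
    then have "y1 = 0" using e True by simp
    then show ?thesis using True \<open>x2 \<noteq> 0\<close> unfolding xy vscale2_def
      by (intro exI[of _ "y2/x2"]) simp
  next
    case False
    have "y2 = y1/x1 * x2" using e False by (simp add: field_simps)
    then show ?thesis using False unfolding xy vscale2_def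
      by (intro exI[of _ "y1/x1"]) simp
  qed
qed

lemma extend: assumes "e \<noteq> (0::'a::field,0)" shows "\<exists>v. det2 e v \<noteq> 0"
proof (cases "fst e = 0")
  case True
  then have "snd e \<noteq> 0" using assms by (cases e) simp
  then show ?thesis using True by (intro exI[of _ "(1,0)"]) (simp add: det2_def)
next
  case False then show ?thesis by (intro exI[of _ "(0,1)"]) (simp add: det2_def)
qed

lemma caseIIa:
  fixes A :: "'a::field sc"
  assumes as: "sc_assoc A" and sq: "\<And>x. sc_mult A x x = (0,0)" and nt: "sc_nontrivial A"
  shows False
proof -
  obtain a1 a2 a3 a4 b1 b2 b3 b4 where A: "A = ((a1,a2,a3,a4),(b1,b2,b3,b4))" by (metis prod.exhaust)
  have s1: "a1 = 0" "b1 = 0" using sq[of "(1,0)"] unfolding A by (simp_all add: sc_mult_eq)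
  have s2: "a4 = 0" "b4 = 0" using sq[of "(0,1)"] unfolding A by (simp_all add: sc_mult_eq)
  have s3: "a2 + a3 = 0" "b2 + b3 = 0" using sq[of "(1,1)"] s1 s2 unfolding A by (simp_all add: sc_mult_eq)
  have "b2*b2 = 0" using assoc_at[OF as, of "(1,0)" "(1,0)" "(0,1)"] s1 s2 unfolding A by (simp add: sc_mult_eq)
  then have b2: "b2 = 0" by simp
  have "a3*a3 = 0" using assoc_at[OF as, of "(0,1)" "(0,1)" "(1,0)"] s1 s2 unfolding A by (simp add: sc_mult_eq)
  then have a3: "a3 = 0" by simp
  have all: "a1 = 0" "a2 = 0" "a3 = 0" "a4 = 0" "b1 = 0" "b2 = 0" "b3 = 0" "b4 = 0"
    using s1 s2 s3 a3 b2 by (simp_all add: add_eq_0_iff)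
  show False using nt unfolding sc_nontrivial_def A all by (auto simp: sc_mult_eq)
qed

lemma classify:
  fixes A :: "'a::field sc"
  assumes as: "sc_assoc A" and nt: "sc_nontrivial A"
  shows "target A"
proof (cases "\<exists>x. det2 x (sc_mult A x x) \<noteq> 0")
  case True
  then obtain x where x: "det2 x (sc_mult A x x) \<noteq> 0" by blast
  let ?v = "sc_mult A x x"
  obtain a1 a2 a3 a4 b1 b2 b3 b4 where r: "sc_iso A ((a1,a2,a3,a4),(b1,b2,b3,b4))"
     "sc_mult A x x = lc a1 b1 x ?v"
    using rebase[OF x, of A] by blast
  have "lc a1 b1 x ?v = lc 0 1 x ?v" using r(2) by (simp add: lc_def)
  then have ab: "a1 = 0" "b1 = 1" using lc_unique[OF x] by blast+
  have "sc_assoc ((a1,a2,a3,a4),(b1,b2,b3,b4))" using iso_assoc[OF r(1) as] .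
  then have "target ((a1,a2,a3,a4),(b1,b2,b3,b4))" using caseI unfolding ab by blast
  then show ?thesis using target_iso[OF r(1)] by blast
next
  case False
  then have P: "\<And>x. det2 x (sc_mult A x x) = 0" by blast
  show ?thesis
  proof (cases "\<exists>x. sc_mult A x x \<noteq> (0,0)")
    case True
    then obtain x where x: "sc_mult A x x \<noteq> (0,0)" by blast
    then have x0: "x \<noteq> (0,0)" by auto
    obtain l where l: "sc_mult A x x = vscale2 l x" using dep[OF P x0] by blast
    have l0: "l \<noteq> 0"
    proof
      assume "l = 0"
      then have "sc_mult A x x = (0,0)" using l by (simp add: vscale2_def)
      with x show False by simp
    qed
    define e where "e = vscale2 (1/l) x"
    have ee: "sc_mult A e e = e" unfolding e_def mul_scale l using l0
      by (simp add: vscale2_def field_simps power2_eq_square)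
    have e0: "e \<noteq> (0,0)" using ee x0 l0 unfolding e_def vscale2_def by (cases x) auto
    obtain v where d: "det2 e v \<noteq> 0" using extend[OF e0] by blast
    obtain a1 a2 a3 a4 b1 b2 b3 b4 where r: "sc_iso A ((a1,a2,a3,a4),(b1,b2,b3,b4))"
      "sc_mult A e e = lc a1 b1 e v" "sc_mult A v v = lc a4 b4 e v"
      using rebase[OF d, of A] by blast
    have "lc a1 b1 e v = lc 1 0 e v" using r(2) ee by (simp add: lc_def)
    then have ab: "a1 = 1" "b1 = 0" using lc_unique[OF d] by blast+
    have "det2 v (lc a4 b4 e v) = 0" using P[of v] r(3) by simp
    then have "a4 * det2 e v = 0" using det_lc1[of a4 b4 e v] det_swap[of v "lc a4 b4 e v"] by simp
    then have a4: "a4 = 0" using d by simp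
    have "sc_assoc ((a1,a2,a3,a4),(b1,b2,b3,b4))" using iso_assoc[OF r(1) as] .
    then have "target ((a1,a2,a3,a4),(b1,b2,b3,b4))" using caseII unfolding ab a4 by blast
    then show ?thesis using target_iso[OF r(1)] by blast
  next
    case False
    then show ?thesis using caseIIa[OF as _ nt] by blast
  qed
qed



lemma two0: "CHAR('a::field) = 2 \<Longrightarrow> (2::'a) = 0"
  using of_nat_CHAR[where 'a='a] by simp

lemma dbl0: "CHAR('a::field) = 2 \<Longrightarrow> (x::'a) + x = 0"
proof -
  assume "CHAR('a) = 2"
  then have h: "(2::'a) = 0" by (rule two0)
  have "x + x = 2 * x" by (rule mult_2[symmetric])
  also have "\<dots> = 0" using h by (metis mult_zero_left)
  finally show ?thesis .
qed
lemma iso_data: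
  assumes "sc_iso A B"
  shows "\<exists>f. linear2 f \<and> (\<forall>x y. f x = f y \<longrightarrow> x = y) \<and> (\<forall>y. \<exists>x. y = f x) \<and>
     (\<forall>x y. f (sc_mult A x y) = sc_mult B (f x) (f y))"
proof -
  obtain f where f: "linear2 f" "bij f" "\<And>x y. f (sc_mult A x y) = sc_mult B (f x) (f y)"
    using assms unfolding sc_iso_def by blast
  have "\<forall>x y. f x = f y \<longrightarrow> x = y" using f(2) by (meson bij_is_inj injD)
  moreover have "\<forall>y. \<exists>x. y = f x" using f(2) by (metis bij_pointE)
  ultimately show ?thesis using f(1,3) by blast
qed

lemma As2_iso_iff:
  fixes b :: "'a::field"
  assumes ch: "CHAR('a) = 2"
  shows "sc_iso (As2 b) (As2 b') \<longleftrightarrow> (\<exists>a c. c \<noteq> 0 \<and> b' = c^2 * (b + a^2))"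
proof
  assume h: "sc_iso (As2 b) (As2 b')"
  obtain f where f: "linear2 f" "\<forall>x y. f x = f y \<longrightarrow> x = y" "\<forall>y. \<exists>x. y = f x"
     "\<forall>x y. f (sc_mult (As2 b) x y) = sc_mult (As2 b') (f x) (f y)" using iso_data[OF h] by blast
  have lu: "sc_mult (As2 b') (f (0,1)) z = z" for z
  proof -
    obtain y where y: "z = f y" using f(3) by blast
    have "sc_mult (As2 b) (0,1) y = y" by (cases y) (simp add: As2_def sc_mult_eq)
    then show ?thesis using f(4)[rule_format, of "(0,1)" y] y by simp
  qed
  have w: "f (0,1) = (0,1)"
    using lu[of "(0,1)"] by (cases "f (0,1)") (simp add: As2_def sc_mult_eq)
  obtain s t where st: "f (1,0) = (s,t)" by (cases "f (1,0)") auto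
  have s0: "s \<noteq> 0"
  proof
    assume "s = 0"
    then have "f (1,0) = f (0,t)" using st w lc_apply[OF f(1), of 0 t] by (simp add: lc_def)
    then have "(1::'a,0::'a) = (0,t)" using f(2) by blast
    then show False by simp
  qed
  have "f (sc_mult (As2 b) (1,0) (1,0)) = (0, b)"
    using lc_apply[OF f(1), of 0 b] w st by (simp add: As2_def sc_mult_eq lc_def)
  moreover have "sc_mult (As2 b') (f (1,0)) (f (1,0)) = (s*t + t*s, s*s*b' + t*t)"
    unfolding st by (simp add: As2_def sc_mult_eq)
  ultimately have eq: "b = s*s*b' + t*t" using f(4)[rule_format, of "(1,0)" "(1,0)"] by simp
  have "b + t*t = s*s*b' + (t*t + t*t)" using eq by (simp add: algebra_simps)
  then have "b + t*t = s*s*b'" using dbl0[OF ch, of "t*t"] by simp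
  then have "b' = (1/s)^2 * (b + t^2)" using s0 by (simp add: field_simps power2_eq_square)
  then show "\<exists>a c. c \<noteq> 0 \<and> b' = c^2 * (b + a^2)" using s0 by (intro exI[of _ t] exI[of _ "1/s"]) simp
next
  assume "\<exists>a c. c \<noteq> 0 \<and> b' = c^2 * (b + a^2)"
  then obtain a c where ac: "c \<noteq> 0" "b' = c^2 * (b + a^2)" by blast
  have z: "c*(c*a) + c*(c*a) = 0" using dbl0[OF ch] .
  have "sc_iso (As2 b) ((0,1,1,0),(b',0,0,1))"
    by (rule basis_iso[where u="(c,c*a)" and v="(0,1)"])
       (use ac z in \<open>simp_all add: As2_def det2_def sc_mult_eq lc_def algebra_simps power2_eq_square\<close>)
  then show "sc_iso (As2 b) (As2 b')" by (simp add: As2_def)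
qed



lemma As4_iso_iff:
  fixes b :: "'a::field"
  assumes ch: "CHAR('a) = 2"
  shows "sc_iso (As4 b) (As4 b') \<longleftrightarrow> (\<exists>a. b' = b + a + a^2)"
proof
  assume h: "sc_iso (As4 b) (As4 b')"
  obtain f where f: "linear2 f" "\<forall>x y. f x = f y \<longrightarrow> x = y" "\<forall>y. \<exists>x. y = f x"
     "\<forall>x y. f (sc_mult (As4 b) x y) = sc_mult (As4 b') (f x) (f y)" using iso_data[OF h] by blast
  have lu: "sc_mult (As4 b') (f (0,1)) z = z" for z
  proof -
    obtain y where y: "z = f y" using f(3) by blast
    have "sc_mult (As4 b) (0,1) y = y" by (cases y) (simp add: As4_def sc_mult_eq)
    then show ?thesis using f(4)[rule_format, of "(0,1)" y] y by simp
  qed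
  have w: "f (0,1) = (0,1)"
    using lu[of "(0,1)"] by (cases "f (0,1)") (simp add: As4_def sc_mult_eq)
  obtain s t where st: "f (1,0) = (s,t)" by (cases "f (1,0)") auto
  have s0: "s \<noteq> 0"
  proof
    assume "s = 0"
    then have "f (1,0) = f (0,t)" using st w lc_apply[OF f(1), of 0 t] by (simp add: lc_def)
    then have "(1::'a,0::'a) = (0,t)" using f(2) by blast
    then show False by simp
  qed
  have "f (sc_mult (As4 b) (1,0) (1,0)) = (s, t + b)"
    using lc_apply[OF f(1), of 1 b] w st by (simp add: As4_def sc_mult_eq lc_def)
  moreover have "sc_mult (As4 b') (f (1,0)) (f (1,0)) = (s*s + s*t + t*s, s*s*b' + t*t)"
    unfolding st by (simp add: As4_def sc_mult_eq)
  ultimately have eq: "s = s*s + (s*t + s*t)" "t + b = s*s*b' + t*t"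
    using f(4)[rule_format, of "(1,0)" "(1,0)"] by (simp_all add: algebra_simps)
  have "s = s*s" using eq(1) dbl0[OF ch, of "s*t"] by simp
  then have s1: "s = 1" using s0 by (metis mult_cancel_left1)
  have e: "b' = t + b - t*t" using eq(2) s1 by (simp add: algebra_simps)
  have "b + t + t*t = (t + b - t*t) + (t*t + t*t)" by (simp add: algebra_simps)
  then have "b' = b + t + t*t" using e dbl0[OF ch, of "t*t"] by simp
  then show "\<exists>a. b' = b + a + a^2" by (intro exI[of _ t]) (simp add: power2_eq_square)
next
  assume "\<exists>a. b' = b + a + a^2"
  then obtain a where a: "b' = b + a + a^2" by blast
  have z: "a + a = 0" using dbl0[OF ch] .
  have "sc_iso (As4 b) ((1,1,1,0),(b',0,0,1))"
    by (rule basis_iso[where u="(1,a)" and v="(0,1)"])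
       (use a z in \<open>simp_all add: As4_def det2_def sc_mult_eq lc_def algebra_simps power2_eq_square\<close>)
  then show "sc_iso (As4 b) (As4 b')" by (simp add: As4_def)
qed



definition unital :: "'a::field sc \<Rightarrow> bool" where
  "unital A \<longleftrightarrow> (\<exists>e. \<forall>x. sc_mult A e x = x \<and> sc_mult A x e = x)"
definition comm :: "'a::field sc \<Rightarrow> bool" where
  "comm A \<longleftrightarrow> (\<forall>x y. sc_mult A x y = sc_mult A y x)"
definition runit :: "'a::field sc \<Rightarrow> bool" where
  "runit A \<longleftrightarrow> (\<exists>e. \<forall>x. sc_mult A x e = x)"
definition nil3 :: "'a::field sc \<Rightarrow> bool" where
  "nil3 A \<longleftrightarrow> (\<forall>x y z. sc_mult A (sc_mult A x y) z = (0,0))"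
definition sqscal :: "'a::field sc \<Rightarrow> bool" where
  "sqscal A \<longleftrightarrow> (\<forall>x. \<exists>c. \<forall>y. sc_mult A (sc_mult A x x) y = vscale2 c y)"

lemma tr_unital: assumes h: "sc_iso A B" "unital A" shows "unital B"
proof -
  obtain f where f: "linear2 f" "\<forall>x y. f x = f y \<longrightarrow> x = y" "\<forall>y. \<exists>x. y = f x"
     "\<forall>x y. f (sc_mult A x y) = sc_mult B (f x) (f y)" using iso_data[OF h(1)] by blast
  obtain e where e: "\<forall>x. sc_mult A e x = x \<and> sc_mult A x e = x" using h(2) unfolding unital_def by blast
  have "sc_mult B (f e) z = z \<and> sc_mult B z (f e) = z" for z
  proof -
    obtain x where x: "z = f x" using f(3) by blast
    show ?thesis unfolding x using e f(4) by metis
  qed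
  then show ?thesis unfolding unital_def by blast
qed

lemma tr_runit: assumes h: "sc_iso A B" "runit A" shows "runit B"
proof -
  obtain f where f: "linear2 f" "\<forall>x y. f x = f y \<longrightarrow> x = y" "\<forall>y. \<exists>x. y = f x"
     "\<forall>x y. f (sc_mult A x y) = sc_mult B (f x) (f y)" using iso_data[OF h(1)] by blast
  obtain e where e: "\<forall>x. sc_mult A x e = x" using h(2) unfolding runit_def by blast
  have "sc_mult B z (f e) = z" for z
  proof -
    obtain x where x: "z = f x" using f(3) by blast
    show ?thesis unfolding x using e f(4) by metis
  qed
  then show ?thesis unfolding runit_def by blast
qed

lemma tr_comm: assumes h: "sc_iso A B" "comm A" shows "comm B"
proof -
  obtain f where f: "linear2 f" "\<forall>x y. f x = f y \<longrightarrow> x = y" "\<forall>y. \<exists>x. y = f x"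
     "\<forall>x y. f (sc_mult A x y) = sc_mult B (f x) (f y)" using iso_data[OF h(1)] by blast
  have "sc_mult B z w = sc_mult B w z" for z w
  proof -
    obtain x where x: "z = f x" using f(3) by blast
    obtain y where y: "w = f y" using f(3) by blast
    show ?thesis unfolding x y using h(2) f(4) unfolding comm_def by metis
  qed
  then show ?thesis unfolding comm_def by blast
qed

lemma tr_nil3: assumes h: "sc_iso A B" "nil3 A" shows "nil3 B"
proof -
  obtain f where f: "linear2 f" "\<forall>x y. f x = f y \<longrightarrow> x = y" "\<forall>y. \<exists>x. y = f x"
     "\<forall>x y. f (sc_mult A x y) = sc_mult B (f x) (f y)" using iso_data[OF h(1)] by blast
  have "sc_mult B (sc_mult B z w) u = (0,0)" for z w u
  proof -
    obtain x where x: "z = f x" using f(3) by blast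
    obtain y where y: "w = f y" using f(3) by blast
    obtain v where v: "u = f v" using f(3) by blast
    have "sc_mult B (sc_mult B z w) u = f (sc_mult A (sc_mult A x y) v)" unfolding x y v using f(4) by metis
    also have "\<dots> = f (0,0)" using h(2) unfolding nil3_def by metis
    also have "\<dots> = (0,0)" using linear2_zero[OF f(1)] .
    finally show ?thesis .
  qed
  then show ?thesis unfolding nil3_def by blast
qed

lemma tr_sqscal: assumes h: "sc_iso A B" "sqscal A" shows "sqscal B"
proof -
  obtain f where f: "linear2 f" "\<forall>x y. f x = f y \<longrightarrow> x = y" "\<forall>y. \<exists>x. y = f x"
     "\<forall>x y. f (sc_mult A x y) = sc_mult B (f x) (f y)" using iso_data[OF h(1)] by blast
  have "\<exists>c. \<forall>w. sc_mult B (sc_mult B z z) w = vscale2 c w" for z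
  proof -
    obtain x where x: "z = f x" using f(3) by blast
    obtain c where c: "\<forall>y. sc_mult A (sc_mult A x x) y = vscale2 c y" using h(2) unfolding sqscal_def by blast
    have "sc_mult B (sc_mult B z z) w = vscale2 c w" for w
    proof -
      obtain y where y: "w = f y" using f(3) by blast
      have "sc_mult B (sc_mult B z z) w = f (sc_mult A (sc_mult A x x) y)" unfolding x y using f(4) by metis
      also have "\<dots> = f (vscale2 c y)" by (simp only: c[rule_format])
      also have "\<dots> = vscale2 c w" unfolding y by (rule linear2_scale[OF f(1)])
      finally show ?thesis .
    qed
    then show ?thesis by blast
  qed
  then show ?thesis unfolding sqscal_def by blast
qed

lemma noniso: assumes "\<And>A B. sc_iso A B \<Longrightarrow> P A \<Longrightarrow> P B"
  shows "P X \<Longrightarrow> \<not> P Y \<Longrightarrow> \<not> sc_iso X Y" "\<not> P X \<Longrightarrow> P Y \<Longrightarrow> \<not> sc_iso X Y"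
  using assms sc_iso_sym by blast+

lemma nU1: "\<not> unital (As1::'a::field sc)"
proof
  assume "unital (As1::'a sc)"
  then obtain e where "sc_mult (As1::'a sc) e (1,0) = (1,0)" unfolding unital_def by blast
  then show False by (cases e) (simp add: As1_def sc_mult_eq)
qed
lemma nU3: "\<not> unital (As3::'a::field sc)"
proof
  assume "unital (As3::'a sc)"
  then obtain e where "sc_mult (As3::'a sc) e (0,1) = (0,1)" unfolding unital_def by blast
  then show False by (cases e) (simp add: As3_def sc_mult_eq)
qed
lemma nU5: "\<not> unital (As5::'a::field sc)"
proof
  assume "unital (As5::'a sc)"
  then obtain e where "sc_mult (As5::'a sc) e (0,1) = (0,1)" unfolding unital_def by blast
  then show False by (cases e) (simp add: As5_def sc_mult_eq)
qed
lemma nU6: "\<not> unital (As6::'a::field sc)"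
proof
  assume "unital (As6::'a sc)"
  then obtain e where "sc_mult (As6::'a sc) (0,1) e = (0,1)" unfolding unital_def by blast
  then show False by (cases e) (simp add: As6_def sc_mult_eq)
qed
lemma U2: "unital (As2 b)"
  unfolding unital_def by (rule exI[of _ "(0,1)"]) (simp add: As2_def sc_mult_eq split_paired_All)
lemma U4: "unital (As4 b)"
  unfolding unital_def by (rule exI[of _ "(0,1)"]) (simp add: As4_def sc_mult_eq split_paired_All)
lemma C1: "comm (As1::'a::field sc)"
  unfolding comm_def by (simp add: As1_def sc_mult_eq split_paired_All algebra_simps)
lemma C5: "comm (As5::'a::field sc)"
  unfolding comm_def by (simp add: As5_def sc_mult_eq split_paired_All algebra_simps)
lemma nC3: "\<not> comm (As3::'a::field sc)"
proof
  assume "comm (As3::'a sc)"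
  then have "sc_mult (As3::'a sc) (1,0) (0,1) = sc_mult As3 (0,1) (1,0)" unfolding comm_def by blast
  then show False by (simp add: As3_def sc_mult_eq)
qed
lemma nC6: "\<not> comm (As6::'a::field sc)"
proof
  assume "comm (As6::'a sc)"
  then have "sc_mult (As6::'a sc) (1,0) (0,1) = sc_mult As6 (0,1) (1,0)" unfolding comm_def by blast
  then show False by (simp add: As6_def sc_mult_eq)
qed
lemma R3: "runit (As3::'a::field sc)"
  unfolding runit_def by (rule exI[of _ "(1,0)"]) (simp add: As3_def sc_mult_eq split_paired_All)
lemma nR6: "\<not> runit (As6::'a::field sc)"
proof
  assume "runit (As6::'a sc)"
  then obtain e where "sc_mult (As6::'a sc) (0,1) e = (0,1)" unfolding runit_def by blast
  then show False by (cases e) (simp add: As6_def sc_mult_eq)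
qed
lemma N1: "nil3 (As1::'a::field sc)"
  unfolding nil3_def by (simp add: As1_def sc_mult_eq split_paired_All)
lemma nN5: "\<not> nil3 (As5::'a::field sc)"
proof
  assume "nil3 (As5::'a sc)"
  then have "sc_mult (As5::'a sc) (sc_mult As5 (1,0) (1,0)) (1,0) = (0,0)" unfolding nil3_def by blast
  then show False by (simp add: As5_def sc_mult_eq)
qed
lemma S2: assumes ch: "CHAR('a) = 2" shows "sqscal (As2 (b::'a::field))"
  unfolding sqscal_def
proof
  fix x :: "'a \<times> 'a"
  obtain s t where x: "x = (s,t)" by fastforce
  have z: "s*t + s*t = 0" using dbl0[OF ch] .
  have "sc_mult (As2 b) x x = (0, s*s*b + t*t)" unfolding x using z by (simp add: As2_def sc_mult_eq algebra_simps)
  then show "\<exists>c. \<forall>y. sc_mult (As2 b) (sc_mult (As2 b) x x) y = vscale2 c y"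
    by (intro exI[of _ "s*s*b + t*t"]) (simp add: As2_def sc_mult_eq vscale2_def split_paired_All)
qed
lemma nS4: "\<not> sqscal (As4 (b::'a::field))"
proof
  assume "sqscal (As4 b)"
  then obtain c where c: "\<forall>y. sc_mult (As4 b) (sc_mult (As4 b) (1,0) (1,0)) y = vscale2 c y" unfolding sqscal_def by blast
  have "(1::'a) = 0" using c[rule_format, of "(0,1)"] by (simp add: As4_def sc_mult_eq vscale2_def)
  then show False by simp
qed

theorem mainTheorem2:
  fixes dummy :: "'a::field"
  assumes "CHAR('a) = 2"
  shows
    "(\<forall>A :: 'a sc. sc_assoc A \<and> sc_nontrivial A \<longrightarrow>
        sc_iso A As1 \<or> (\<exists>b. sc_iso A (As2 b)) \<or> sc_iso A As3 \<or>
        (\<exists>b. sc_iso A (As4 b)) \<or> sc_iso A As5 \<or> sc_iso A As6)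
   \<and> (\<forall>b b' :: 'a. sc_iso (As2 b) (As2 b') \<longleftrightarrow> (\<exists>a c. c \<noteq> 0 \<and> b' = c^2 * (b + a^2)))
   \<and> (\<forall>b b' :: 'a. sc_iso (As4 b) (As4 b') \<longleftrightarrow> (\<exists>a. b' = b + a + a^2))
   \<and> (\<forall>b b' :: 'a.
        \<not> sc_iso (As1 :: 'a sc) (As2 b) \<and> \<not> sc_iso (As1 :: 'a sc) As3 \<and> \<not> sc_iso (As1 :: 'a sc) (As4 b) \<and>
        \<not> sc_iso (As1 :: 'a sc) As5 \<and> \<not> sc_iso (As1 :: 'a sc) As6 \<and>
        \<not> sc_iso (As2 b) As3 \<and> \<not> sc_iso (As2 b) (As4 b') \<and> \<not> sc_iso (As2 b) As5 \<and> \<not> sc_iso (As2 b) As6 \<and>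
        \<not> sc_iso (As3 :: 'a sc) (As4 b) \<and> \<not> sc_iso (As3 :: 'a sc) As5 \<and> \<not> sc_iso (As3 :: 'a sc) As6 \<and>
        \<not> sc_iso (As4 b) As5 \<and> \<not> sc_iso (As4 b) As6 \<and>
        \<not> sc_iso (As5 :: 'a sc) As6)"
proof -
  have P1: "\<forall>A :: 'a sc. sc_assoc A \<and> sc_nontrivial A \<longrightarrow>
        sc_iso A As1 \<or> (\<exists>b. sc_iso A (As2 b)) \<or> sc_iso A As3 \<or>
        (\<exists>b. sc_iso A (As4 b)) \<or> sc_iso A As5 \<or> sc_iso A As6"
    using classify unfolding target_def by blast
  have P2: "\<forall>b b' :: 'a. sc_iso (As2 b) (As2 b') \<longleftrightarrow> (\<exists>a c. c \<noteq> 0 \<and> b' = c^2 * (b + a^2))"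
    using As2_iso_iff[OF assms] by blast
  have P3: "\<forall>b b' :: 'a. sc_iso (As4 b) (As4 b') \<longleftrightarrow> (\<exists>a. b' = b + a + a^2)"
    using As4_iso_iff[OF assms] by blast
  have P4: "\<forall>b b' :: 'a.
        \<not> sc_iso (As1 :: 'a sc) (As2 b) \<and> \<not> sc_iso (As1 :: 'a sc) As3 \<and> \<not> sc_iso (As1 :: 'a sc) (As4 b) \<and>
        \<not> sc_iso (As1 :: 'a sc) As5 \<and> \<not> sc_iso (As1 :: 'a sc) As6 \<and>
        \<not> sc_iso (As2 b) As3 \<and> \<not> sc_iso (As2 b) (As4 b') \<and> \<not> sc_iso (As2 b) As5 \<and> \<not> sc_iso (As2 b) As6 \<and>
        \<not> sc_iso (As3 :: 'a sc) (As4 b) \<and> \<not> sc_iso (As3 :: 'a sc) As5 \<and> \<not> sc_iso (As3 :: 'a sc) As6 \<and>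
        \<not> sc_iso (As4 b) As5 \<and> \<not> sc_iso (As4 b) As6 \<and>
        \<not> sc_iso (As5 :: 'a sc) As6"
  proof (intro allI conjI)
    fix b b' :: 'a
    show "\<not> sc_iso (As1 :: 'a sc) (As2 b)" by (rule noniso(2)[OF tr_unital nU1 U2])
    show "\<not> sc_iso (As1 :: 'a sc) As3" by (rule noniso(1)[OF tr_comm C1 nC3])
    show "\<not> sc_iso (As1 :: 'a sc) (As4 b)" by (rule noniso(2)[OF tr_unital nU1 U4])
    show "\<not> sc_iso (As1 :: 'a sc) As5" by (rule noniso(1)[OF tr_nil3 N1 nN5])
    show "\<not> sc_iso (As1 :: 'a sc) As6" by (rule noniso(1)[OF tr_comm C1 nC6])
    show "\<not> sc_iso (As2 b) As3" by (rule noniso(1)[OF tr_unital U2 nU3])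
    show "\<not> sc_iso (As2 b) (As4 b')" by (rule noniso(1)[OF tr_sqscal S2[OF assms] nS4])
    show "\<not> sc_iso (As2 b) As5" by (rule noniso(1)[OF tr_unital U2 nU5])
    show "\<not> sc_iso (As2 b) As6" by (rule noniso(1)[OF tr_unital U2 nU6])
    show "\<not> sc_iso (As3 :: 'a sc) (As4 b)" by (rule noniso(2)[OF tr_unital nU3 U4])
    show "\<not> sc_iso (As3 :: 'a sc) As5" by (rule noniso(2)[OF tr_comm nC3 C5])
    show "\<not> sc_iso (As3 :: 'a sc) As6" by (rule noniso(1)[OF tr_runit R3 nR6])
    show "\<not> sc_iso (As4 b) As5" by (rule noniso(1)[OF tr_unital U4 nU5])
    show "\<not> sc_iso (As4 b) As6" by (rule noniso(1)[OF tr_unital U4 nU6])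
    show "\<not> sc_iso (As5 :: 'a sc) As6" by (rule noniso(1)[OF tr_comm C5 nC6])
  qed
  show ?thesis using P1 P2 P3 P4 by blast
qed

end
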